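(* Let $\mathsf{k}$ be a field, $n\ge2$, $R=\mathsf{k}[x_1,\dots,x_r]$, $S=R[t]$, $A=\mathsf{k}[t]/(t^n)$, $F_B\in Q_R$ homogeneous of degree $j_B$, $I_B=\operatorname{Ann}_R(F_B)$, $B=R/I_B$. Let $G\in Q_R$ be homogeneous of degree $j_B+n-1$ and $F=T^{[n-1]}F_B+G\in Q_S$. Then $C=S/\operatorname{Ann}_S(F)$ is a free extension with base $A$ and fiber $B$ (via $\iota,\pi$) if and only if $(I_B)^2\circ G=0$.
   Context: $Q_R=\mathsf{k}_{DP}[X_1,\dots,X_r]$, $Q_S=\mathsf{k}_{DP}[X_1,\dots,X_r,T]$ divided power rings with contraction action ($x_i^s\circ X_i^{[k]}=X_i^{[k-s]}$ for $k\ge s$, else $0$; likewise $t$ on $T$); $\operatorname{Ann}$ denotes annihilator under this action. $\iota:A\to C$ is induced by $\mathsf{k}[t]\subset S$, $\pi:C\to B$ by $t\mapsto0$, $x_i\mapsto x_i$. $C$ is a free extension with base $A$ and fiber $B$ if $\iota$ makes $C$ a free $A$-module and $\pi$ is surjective with $\ker\pi=(\iota(A_+))C$. *)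

theory Defs
  imports "HOL-Library.Poly_Mapping"
begin

text \<open>Polynomials (and divided power polynomials) in the variables indexed by nat:
  a monomial is an exponent vector nat =>0 nat, an element is a finitely supported
  coefficient function on monomials. Variable 0 plays the role of t (resp. T),
  variables 1..r play the role of x_1..x_r (resp. X_1..X_r).\<close>

type_synonym 'k mpoly = "(nat \<Rightarrow>\<^sub>0 nat) \<Rightarrow>\<^sub>0 'k"

definition polys_in :: "nat set \<Rightarrow> 'k::zero mpoly set" where
  "polys_in V = {f. \<forall>m\<in>Poly_Mapping.keys f. Poly_Mapping.keys m \<subseteq> V}"

text \<open>R = k[x_1..x_r] (also used for Q_R as a set), S = R[t] (also Q_S), k[t].\<close>
definition Rset :: "nat \<Rightarrow> 'k::zero mpoly set" where "Rset r = polys_in {1..r}"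
definition Sset :: "nat \<Rightarrow> 'k::zero mpoly set" where "Sset r = polys_in {0..r}"
definition ktset :: "'k::zero mpoly set" where "ktset = polys_in {0}"

text \<open>the variable t, and the monomial t^k (also the divided power T^[k])\<close>
definition tpow :: "nat \<Rightarrow> 'k::{zero,one} mpoly" where
  "tpow k = Poly_Mapping.single (Poly_Mapping.single 0 k) 1"

definition mdeg :: "(nat \<Rightarrow>\<^sub>0 nat) \<Rightarrow> nat" where
  "mdeg m = (\<Sum>i\<in>Poly_Mapping.keys m. Poly_Mapping.lookup m i)"

definition homogeneous :: "nat \<Rightarrow> 'k::zero mpoly \<Rightarrow> bool" where
  "homogeneous d F \<longleftrightarrow> (\<forall>m\<in>Poly_Mapping.keys F. mdeg m = d)"

text \<open>Contraction action of polynomials on divided powers: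
  x^a o X^[b] = X^[b-a] if a <= b, else 0; extended bilinearly.
  Coefficientwise: (f o F)_c = sum_a f_a F_(a+c).\<close>
definition contract :: "'k::comm_semiring_1 mpoly \<Rightarrow> 'k mpoly \<Rightarrow> 'k mpoly" where
  "contract f F = Abs_poly_mapping (\<lambda>c. \<Sum>a\<in>Poly_Mapping.keys f. Poly_Mapping.lookup f a * Poly_Mapping.lookup F (a + c))"

definition Ann :: "nat set \<Rightarrow> 'k::comm_semiring_1 mpoly \<Rightarrow> 'k mpoly set" where
  "Ann V F = {f \<in> polys_in V. contract f F = 0}"

definition ideal_sq :: "'k::comm_ring_1 mpoly set \<Rightarrow> 'k mpoly set" where
  "ideal_sq I = {p. \<exists>fs gs. length fs = length gs \<and> set fs \<subseteq> I \<and> set gs \<subseteq> I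
                     \<and> p = sum_list (map2 (*) fs gs)}"

definition t_to_0 :: "'k::zero mpoly \<Rightarrow> 'k mpoly" where
  "t_to_0 s = Abs_poly_mapping (\<lambda>m. if Poly_Mapping.lookup m 0 = 0 then Poly_Mapping.lookup s m else 0)"

text \<open>Free extension, with C = S/J, A = k[t]/(t^n), B = R/IB, iota : A -> C induced by
  k[t] \<subseteq> S and pi : C -> B induced by t |-> 0, all unfolded on representatives:
  (1) C is a free A-module via iota: there is a set Bs of representatives in S whose classes
      form an A-basis of C (spanning and A-linear independence, A acting through iota);
  (2) pi is surjective;
  (3) ker pi = iota(A_+) C, where A_+ = (t)/(t^n); the preimage in S of the ideal of C
      generated by iota(A_+) is J + t S.\<close>
definition free_extension :: "nat \<Rightarrow> nat \<Rightarrow> 'k::field mpoly set \<Rightarrow> 'k mpoly set \<Rightarrow> bool" where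
  "free_extension r n J IB \<longleftrightarrow>
     (\<exists>Bs \<subseteq> Sset r.
        (\<forall>s\<in>Sset r. \<exists>Bs0 a. finite Bs0 \<and> Bs0 \<subseteq> Bs \<and> (\<forall>b\<in>Bs0. a b \<in> ktset)
              \<and> s - (\<Sum>b\<in>Bs0. a b * b) \<in> J)
      \<and> (\<forall>Bs0 a. finite Bs0 \<and> Bs0 \<subseteq> Bs \<and> (\<forall>b\<in>Bs0. a b \<in> ktset)
              \<and> (\<Sum>b\<in>Bs0. a b * b) \<in> J
              \<longrightarrow> (\<forall>b\<in>Bs0. \<exists>q\<in>ktset. a b = tpow n * q)))
   \<and> (\<forall>g\<in>Rset r. \<exists>s\<in>Sset r. t_to_0 s - g \<in> IB)
   \<and> (\<forall>s\<in>Sset r. t_to_0 s \<in> IB \<longleftrightarrow> (\<exists>u\<in>Sset r. s - tpow 1 * u \<in> J))"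

end

theory Submission
  imports Defs "HOL.Vector_Spaces" "HOL-Library.FuncSet"
begin

lemma keys_add_nat: "Poly_Mapping.keys ((a::nat\<Rightarrow>\<^sub>0nat) + b) = Poly_Mapping.keys a \<union> Poly_Mapping.keys b"
  by (auto simp: in_keys_iff lookup_add)

lemma poly_expand: "(p::'a \<Rightarrow>\<^sub>0 'b::comm_monoid_add) = (\<Sum>a\<in>Poly_Mapping.keys p. Poly_Mapping.single a (Poly_Mapping.lookup p a))"
proof (rule poly_mapping_eqI)
  fix k
  have "Poly_Mapping.lookup (\<Sum>a\<in>Poly_Mapping.keys p. Poly_Mapping.single a (Poly_Mapping.lookup p a)) k
     = (\<Sum>a\<in>Poly_Mapping.keys p. Poly_Mapping.lookup (Poly_Mapping.single a (Poly_Mapping.lookup p a)) k)"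
    by (simp add: lookup_sum)
  also have "\<dots> = Poly_Mapping.lookup p k"
    by (cases "k \<in> Poly_Mapping.keys p") (auto simp: lookup_single when_def in_keys_iff)
  finally show "Poly_Mapping.lookup p k = Poly_Mapping.lookup (\<Sum>a\<in>Poly_Mapping.keys p. Poly_Mapping.single a (Poly_Mapping.lookup p a)) k" by simp
qed

lemma contract_fin:
  fixes f F :: "'k::comm_semiring_1 mpoly"
  shows "finite {c. (\<Sum>a\<in>Poly_Mapping.keys f. Poly_Mapping.lookup f a * Poly_Mapping.lookup F (a + c)) \<noteq> 0}"
proof -
  have "{c. (\<Sum>a\<in>Poly_Mapping.keys f. Poly_Mapping.lookup f a * Poly_Mapping.lookup F (a + c)) \<noteq> 0}
     \<subseteq> (\<Union>a\<in>Poly_Mapping.keys f. (\<lambda>c. a + c) -` Poly_Mapping.keys F)"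
    by (auto elim!: sum.not_neutral_contains_not_neutral simp: in_keys_iff) (metis in_keys_iff mult_zero_right)
  moreover have "finite (\<Union>a\<in>Poly_Mapping.keys f. (\<lambda>c. a + c) -` Poly_Mapping.keys F)"
    by (intro finite_UN_I finite_keys finite_vimageI) (auto simp: inj_on_def)
  ultimately show ?thesis by (rule finite_subset)
qed

lemma lookup_contract:
  "Poly_Mapping.lookup (contract f F) c = (\<Sum>a\<in>Poly_Mapping.keys f. Poly_Mapping.lookup f a * Poly_Mapping.lookup F (a + c))"
  unfolding contract_def using contract_fin[of f F] by simp

lemma lookup_contract_sup:
  assumes "finite A" "Poly_Mapping.keys f \<subseteq> A"
  shows "Poly_Mapping.lookup (contract f F) c = (\<Sum>a\<in>A. Poly_Mapping.lookup f a * Poly_Mapping.lookup F (a + c))"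
  unfolding lookup_contract using assms
  by (intro sum.mono_neutral_left) (auto simp: in_keys_iff)

abbreviation lk where "lk \<equiv> Poly_Mapping.lookup"
abbreviation ks where "ks \<equiv> Poly_Mapping.keys"

lemma contract_add_left: "contract (f + g) F = contract f F + contract g F"
proof (rule poly_mapping_eqI)
  fix c
  let ?A = "ks f \<union> ks g"
  have "finite ?A" by simp
  have "lk (contract (f + g) F) c = (\<Sum>a\<in>?A. lk (f+g) a * lk F (a + c))"
    using keys_add[of f g] by (intro lookup_contract_sup) auto
  also have "\<dots> = (\<Sum>a\<in>?A. lk f a * lk F (a + c)) + (\<Sum>a\<in>?A. lk g a * lk F (a + c))"
    by (simp add: lookup_add distrib_right sum.distrib)
  also have "\<dots> = lk (contract f F) c + lk (contract g F) c"
    by (subst (1 2) lookup_contract_sup[of ?A]) auto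
  finally show "lk (contract (f + g) F) c = lk (contract f F + contract g F) c"
    by (simp add: lookup_add)
qed

lemma contract_add_right: "contract f (F + G) = contract f F + contract f G"
  by (rule poly_mapping_eqI) (simp add: lookup_add lookup_contract distrib_left sum.distrib)

lemma contract_zero_left[simp]: "contract 0 F = 0"
  by (rule poly_mapping_eqI) (simp add: lookup_contract)

lemma contract_zero_right[simp]: "contract f 0 = 0"
  by (rule poly_mapping_eqI) (simp add: lookup_contract)

lemma contract_uminus_left: "contract (- f) (F::'k::comm_ring_1 mpoly) = - contract f F"
  using contract_add_left[of f "-f" F] by (simp add: eq_neg_iff_add_eq_0 add.commute)

lemma contract_uminus_right: "contract f (- F::'k::comm_ring_1 mpoly) = - contract f F"
  using contract_add_right[of f F "-F"] by (simp add: eq_neg_iff_add_eq_0 add.commute)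

lemma contract_diff_left: "contract (f - g) (F::'k::comm_ring_1 mpoly) = contract f F - contract g F"
  using contract_add_left[of f "-g" F] by (simp add: contract_uminus_left)

lemma contract_diff_right: "contract f (F - G::'k::comm_ring_1 mpoly) = contract f F - contract f G"
  using contract_add_right[of f F "-G"] by (simp add: contract_uminus_right)

lemma contract_sum_left: "contract (sum h A) F = (\<Sum>x\<in>A. contract (h x) F)"
  by (induct A rule: infinite_finite_induct) (auto simp: contract_add_left)

lemma contract_sum_right: "contract f (sum H A) = (\<Sum>x\<in>A. contract f (H x))"
  by (induct A rule: infinite_finite_induct) (auto simp: contract_add_right)

lemma lookup_contract_single:
  "lk (contract (Poly_Mapping.single a v) F) c = v * lk F (a + c)"
  by (subst lookup_contract_sup[of "{a}"]) (auto simp: lookup_single)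

lemma contract_single_single:
  "contract (Poly_Mapping.single (a+b) (v*w)) F = contract (Poly_Mapping.single a v) (contract (Poly_Mapping.single b w) F)"
  by (rule poly_mapping_eqI) (simp add: lookup_contract_single ac_simps)

lemma contract_mult: "contract (f * g) F = contract f (contract g F)"
proof -
  have "(\<Sum>a\<in>ks f. Poly_Mapping.single a (lk f a)) * (\<Sum>b\<in>ks g. Poly_Mapping.single b (lk g b)) = (\<Sum>a\<in>ks f. \<Sum>b\<in>ks g. Poly_Mapping.single (a+b) (lk f a * lk g b))"
    by (simp add: sum_distrib_left sum_distrib_right mult_single) (rule sum.swap)
  hence "f * g = (\<Sum>a\<in>ks f. \<Sum>b\<in>ks g. Poly_Mapping.single (a+b) (lk f a * lk g b))"
    by (simp only: poly_expand[symmetric])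
  hence "contract (f*g) F = (\<Sum>a\<in>ks f. \<Sum>b\<in>ks g. contract (Poly_Mapping.single (a+b) (lk f a * lk g b)) F)"
    by (simp add: contract_sum_left)
  also have "\<dots> = (\<Sum>a\<in>ks f. \<Sum>b\<in>ks g. contract (Poly_Mapping.single a (lk f a)) (contract (Poly_Mapping.single b (lk g b)) F))"
    by (simp add: contract_single_single)
  also have "\<dots> = contract (\<Sum>a\<in>ks f. Poly_Mapping.single a (lk f a)) (contract (\<Sum>b\<in>ks g. Poly_Mapping.single b (lk g b)) F)"
    by (simp add: contract_sum_left contract_sum_right) (rule sum.swap)
  also have "\<dots> = contract f (contract g F)"
    by (simp only: poly_expand[symmetric])
  finally show ?thesis .
qed

lemma contract_comm: "contract f (contract g F) = contract g (contract (f::'k::comm_semiring_1 mpoly) F)"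
  by (metis contract_mult mult.commute)

lemma contract_one[simp]: "contract 1 F = F"
  by (rule poly_mapping_eqI) (simp add: lookup_contract_sup[of "{0}"] lookup_one)

lemma lookup_scal: "lk (Poly_Mapping.single 0 v * p) m = v * lk p m"
  by (simp add: mult_map_scale_conv_mult[symmetric] map.rep_eq when_def)

lemma lookup_single_mult:
  fixes q :: "'k::comm_semiring_1 mpoly"
  shows "lk (Poly_Mapping.single a v * q) m = (if \<exists>m'. m = a + m' then v * lk q (m - a) else 0)"
proof -
  have "Poly_Mapping.single a v * q = (\<Sum>b\<in>ks q. Poly_Mapping.single (a+b) (v * lk q b))"
    by (subst poly_expand[of q]) (simp add: sum_distrib_left mult_single)
  hence "lk (Poly_Mapping.single a v * q) m = (\<Sum>b\<in>ks q. lk (Poly_Mapping.single (a+b) (v * lk q b)) m)"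
    by (simp add: lookup_sum)
  also have "\<dots> = (if \<exists>m'. m = a + m' then v * lk q (m - a) else 0)"
  proof (cases "\<exists>m'. m = a + m'")
    case True
    then obtain m' where m: "m = a + m'" by blast
    have "(\<Sum>b\<in>ks q. lk (Poly_Mapping.single (a+b) (v * lk q b)) m) = (\<Sum>b\<in>ks q. if b = m' then v * lk q b else 0)"
      by (intro sum.cong) (auto simp: m lookup_single when_def add_left_cancel)
    also have "\<dots> = v * lk q m'"
      by (cases "m' \<in> ks q") (auto simp: in_keys_iff)
    finally show ?thesis using m by simp
  next
    case False
    then show ?thesis by (simp, intro sum.neutral) (auto simp: lookup_single when_def)
  qed
  finally show ?thesis .
qed

definition noT :: "'k::zero mpoly \<Rightarrow> bool" where
  "noT H \<longleftrightarrow> (\<forall>m\<in>ks H. lk m 0 = 0)"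

lemma noT_lookup: "noT H \<Longrightarrow> lk m 0 \<noteq> 0 \<Longrightarrow> lk H m = 0"
  unfolding noT_def by (metis in_keys_iff)

lemma noTI: "(\<And>m. lk m 0 \<noteq> 0 \<Longrightarrow> lk H m = 0) \<Longrightarrow> noT H"
  unfolding noT_def by (auto simp: in_keys_iff)

lemma split_mono: fixes m :: "nat \<Rightarrow>\<^sub>0 nat" shows "k \<le> lk m 0 \<Longrightarrow> m = Poly_Mapping.single 0 k + (m - Poly_Mapping.single (0::nat) k)"
  by (rule poly_mapping_eqI) (auto simp: lookup_add lookup_minus lookup_single when_def)

lemma ex_split_iff: fixes m :: "nat \<Rightarrow>\<^sub>0 nat" shows "(\<exists>m'. m = Poly_Mapping.single (0::nat) k + m') \<longleftrightarrow> k \<le> lk m 0"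
  using split_mono[of k m] by (auto simp: lookup_add)

lemma lookup_tpow_mult:
  fixes q :: "'k::comm_semiring_1 mpoly"
  shows "lk (tpow k * q) m = (if k \<le> lk m 0 then lk q (m - Poly_Mapping.single 0 k) else 0)"
  unfolding tpow_def lookup_single_mult ex_split_iff by simp

lemma tpow_mult: "tpow a * tpow b = (tpow (a+b) :: 'k::comm_semiring_1 mpoly)"
  unfolding tpow_def by (simp add: mult_single single_add)

lemma tpow_0[simp]: "tpow 0 = (1::'k::comm_semiring_1 mpoly)"
  unfolding tpow_def by simp

lemma lookup_contract_tpow:
  fixes s :: "'k::comm_semiring_1 mpoly"
  shows "lk (contract (tpow k) s) c = lk s (Poly_Mapping.single 0 k + c)"
  unfolding tpow_def lookup_contract_single by simp

lemma contract_tpow_tpow: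
  fixes H :: "'k::comm_semiring_1 mpoly"
  assumes "noT H"
  shows "contract (tpow k) (tpow m * H) = (if k \<le> m then tpow (m-k) * H else 0)"
proof (rule poly_mapping_eqI)
  fix c
  show "lk (contract (tpow k) (tpow m * H)) c = lk (if k \<le> m then tpow (m-k) * H else 0) c"
  proof (cases "k \<le> m")
    case True
    have eq: "Poly_Mapping.single 0 k + c - Poly_Mapping.single 0 m = c - Poly_Mapping.single 0 (m-k)"
      if "m \<le> k + lk c 0"
      using True that by (intro poly_mapping_eqI) (auto simp: lookup_add lookup_minus lookup_single when_def)
    show ?thesis using True
      by (auto simp: lookup_contract_tpow lookup_tpow_mult lookup_add eq)
  next
    case False
    have "lk H (Poly_Mapping.single 0 k + c - Poly_Mapping.single 0 m) = 0"
      using False by (intro noT_lookup[OF assms]) (auto simp: lookup_add lookup_minus)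
    then show ?thesis using False
      by (auto simp: lookup_contract_tpow lookup_tpow_mult lookup_add)
  qed
qed

lemma contract_noT_tpow:
  fixes g H :: "'k::comm_semiring_1 mpoly"
  assumes "noT g"
  shows "contract g (tpow m * H) = tpow m * contract g H"
proof (rule poly_mapping_eqI)
  fix c
  have a0: "lk a 0 = 0" if "a \<in> ks g" for a using assms that unfolding noT_def by auto
  have eq: "a + c - Poly_Mapping.single 0 m = a + (c - Poly_Mapping.single 0 m)" if "a \<in> ks g" "m \<le> lk c 0" for a
    using a0[OF that(1)] that(2)
    by (intro poly_mapping_eqI) (auto simp: lookup_add lookup_minus lookup_single when_def)
  show "lk (contract g (tpow m * H)) c = lk (tpow m * contract g H) c"
    by (auto simp: lookup_contract lookup_tpow_mult lookup_add a0 eq intro!: sum.cong)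
qed

lemma noT_contract: "noT H \<Longrightarrow> noT (contract f H)"
proof (rule noTI)
  fix m :: "nat \<Rightarrow>\<^sub>0 nat" assume H: "noT H" and m: "lk m 0 \<noteq> 0"
  have "lk H (a + m) = 0" for a using noT_lookup[OF H, of "a+m"] m by (simp add: lookup_add)
  then show "lk (contract f H) m = 0" by (simp add: lookup_contract)
qed

lemma t_to_0_fin: "finite {m. (if lk m 0 = 0 then lk s m else 0) \<noteq> 0}"
  by (rule finite_subset[of _ "ks s"]) (auto simp: in_keys_iff split: if_splits)

lemma lookup_t_to_0: "lk (t_to_0 s) m = (if lk m 0 = 0 then lk s m else 0)"
  unfolding t_to_0_def using t_to_0_fin[of s] by simp

lemma t_to_0_noT: "noT s \<Longrightarrow> t_to_0 s = s"
  by (rule poly_mapping_eqI) (auto simp: lookup_t_to_0 noT_lookup)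

lemma noT_t_to_0: "noT (t_to_0 s)"
  by (rule noTI) (simp add: lookup_t_to_0)

lemma t_to_0_add: "t_to_0 (a + b) = t_to_0 a + t_to_0 b"
  by (rule poly_mapping_eqI) (auto simp: lookup_t_to_0 lookup_add)

lemma t_to_0_diff: "t_to_0 (a - b) = t_to_0 a - (t_to_0 b :: 'k::ab_group_add mpoly)"
  by (rule poly_mapping_eqI) (auto simp: lookup_t_to_0 lookup_minus)

lemma t_to_0_contract:
  fixes f H :: "'k::comm_semiring_1 mpoly"
  assumes "noT H"
  shows "contract (t_to_0 f) H = contract f H"
proof (rule poly_mapping_eqI)
  fix c
  have "ks (t_to_0 f) \<subseteq> ks f" by (auto simp: in_keys_iff lookup_t_to_0 split: if_splits)
  then have "lk (contract (t_to_0 f) H) c = (\<Sum>a\<in>ks f. lk (t_to_0 f) a * lk H (a + c))"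
    by (intro lookup_contract_sup) auto
  also have "\<dots> = (\<Sum>a\<in>ks f. lk f a * lk H (a + c))"
    using noT_lookup[OF assms] by (intro sum.cong) (auto simp: lookup_t_to_0 lookup_add)
  finally show "lk (contract (t_to_0 f) H) c = lk (contract f H) c"
    by (simp add: lookup_contract)
qed

lemma t_to_0_low:
  fixes f H :: "'k::comm_semiring_1 mpoly"
  assumes "\<forall>a\<in>ks f. lk a 0 < m"
  shows "t_to_0 (contract f (tpow m * H)) = 0"
  using assms by (intro poly_mapping_eqI) 
    (auto simp: lookup_t_to_0 lookup_contract lookup_tpow_mult lookup_add intro!: sum.neutral)

lemma tpow_contract_tpow:
  fixes s :: "'k::comm_semiring_1 mpoly"
  shows "lk (tpow k * contract (tpow k) s) m = (if k \<le> lk m 0 then lk s m else 0)"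
  by (auto simp: lookup_tpow_mult lookup_contract_tpow split_mono[symmetric])

lemma t_to_0_decomp:
  fixes s :: "'k::comm_ring_1 mpoly"
  shows "s = t_to_0 s + tpow 1 * contract (tpow 1) s"
  by (rule poly_mapping_eqI) (auto simp: lookup_add tpow_contract_tpow lookup_t_to_0)

lemma low_decomp:
  fixes s :: "'k::comm_ring_1 mpoly"
  shows "\<forall>a\<in>ks (s - tpow k * contract (tpow k) s). lk a 0 < k"
  by (auto simp: in_keys_iff lookup_minus tpow_contract_tpow split: if_splits)

lemma polys_inD: "f \<in> polys_in V \<Longrightarrow> m \<in> ks f \<Longrightarrow> ks m \<subseteq> V"
  unfolding polys_in_def by auto

lemma polys_inI: "(\<And>m. m \<in> ks f \<Longrightarrow> ks m \<subseteq> V) \<Longrightarrow> f \<in> polys_in V"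
  unfolding polys_in_def by auto

lemma polys_in_0[simp]: "0 \<in> polys_in V"
  by (rule polys_inI) simp

lemma polys_in_add: "f \<in> polys_in V \<Longrightarrow> g \<in> polys_in V \<Longrightarrow> f + g \<in> polys_in V"
  using keys_add[of f g] by (intro polys_inI) (auto dest: polys_inD)

lemma polys_in_uminus: "f \<in> polys_in V \<Longrightarrow> - (f::'k::ab_group_add mpoly) \<in> polys_in V"
  by (rule polys_inI) (auto dest: polys_inD simp: in_keys_iff)

lemma polys_in_diff: "f \<in> polys_in V \<Longrightarrow> g \<in> polys_in V \<Longrightarrow> f - (g::'k::ab_group_add mpoly) \<in> polys_in V"
  using polys_in_add[OF _ polys_in_uminus] by (metis diff_conv_add_uminus)

lemma polys_in_mult: "f \<in> polys_in V \<Longrightarrow> g \<in> polys_in V \<Longrightarrow> f * (g::'k::comm_semiring_1 mpoly) \<in> polys_in V"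
proof (rule polys_inI)
  fix m assume f: "f \<in> polys_in V" and g: "g \<in> polys_in V" and m: "m \<in> ks (f * g)"
  then obtain a b where "m = a + b" "a \<in> ks f" "b \<in> ks g" using keys_mult by blast
  then show "ks m \<subseteq> V" using polys_inD[OF f] polys_inD[OF g] by (auto simp: keys_add_nat)
qed

lemma polys_in_sum: "(\<And>x. x \<in> A \<Longrightarrow> h x \<in> polys_in V) \<Longrightarrow> sum h A \<in> polys_in V"
  by (induct A rule: infinite_finite_induct) (auto intro: polys_in_add)

lemma polys_in_single: "ks m \<subseteq> V \<Longrightarrow> Poly_Mapping.single m v \<in> polys_in V"
  by (rule polys_inI) (auto split: if_splits)

lemma polys_in_const: "Poly_Mapping.single 0 v \<in> polys_in V"
  by (rule polys_in_single) simp

lemma polys_in_tpow: "0 \<in> V \<Longrightarrow> tpow k \<in> polys_in V"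
  unfolding tpow_def by (rule polys_in_single) simp

lemma polys_in_mono: "f \<in> polys_in V \<Longrightarrow> V \<subseteq> W \<Longrightarrow> f \<in> polys_in W"
  unfolding polys_in_def by blast

lemma polys_in_contract: "F \<in> polys_in V \<Longrightarrow> contract f F \<in> polys_in V"
proof (rule polys_inI)
  fix c assume F: "F \<in> polys_in V" and c: "c \<in> ks (contract f F)"
  have "(\<Sum>a\<in>ks f. lk f a * lk F (a + c)) \<noteq> 0" using c by (simp add: in_keys_iff lookup_contract)
  then obtain a where "lk f a * lk F (a + c) \<noteq> 0" by (rule sum.not_neutral_contains_not_neutral)
  then have "lk F (a + c) \<noteq> 0" by auto
  then have "ks (a + c) \<subseteq> V" using polys_inD[OF F] by (simp add: in_keys_iff)
  then show "ks c \<subseteq> V" by (auto simp: keys_add_nat)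
qed

lemma polys_in_t_to_0: "s \<in> polys_in {0..r} \<Longrightarrow> t_to_0 s \<in> polys_in {1..r}"
proof (rule polys_inI)
  fix m assume s: "s \<in> polys_in {0..r}" and m: "m \<in> ks (t_to_0 s)"
  then have "m \<in> ks s" "lk m 0 = 0" by (auto simp: in_keys_iff lookup_t_to_0 split: if_splits)
  show "ks m \<subseteq> {1..r}"
  proof
    fix i assume i: "i \<in> ks m"
    have "i \<in> {0..r}" using polys_inD[OF s \<open>m \<in> ks s\<close>] i by blast
    moreover have "i \<noteq> 0" using i \<open>lk m 0 = 0\<close> by (metis in_keys_iff)
    ultimately show "i \<in> {1..r}" by auto
  qed
qed

lemma Rset_noT: "g \<in> Rset r \<Longrightarrow> noT g"
proof -
  assume g: "g \<in> Rset r"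
  have "lk m 0 = 0" if "m \<in> ks g" for m
  proof -
    have "ks m \<subseteq> {1..r}" using polys_inD[OF g[unfolded Rset_def] that] .
    hence "0 \<notin> ks m" by auto
    thus ?thesis by (simp add: in_keys_iff)
  qed
  thus ?thesis unfolding noT_def by blast
qed

lemma Rset_Sset: "g \<in> Rset r \<Longrightarrow> g \<in> Sset r"
  unfolding Rset_def Sset_def by (erule polys_in_mono) auto

lemma ktset_const: "a \<in> ktset \<Longrightarrow> t_to_0 a = Poly_Mapping.single 0 (lk a 0)"
proof (rule poly_mapping_eqI)
  fix m assume a: "a \<in> ktset"
  have "m = 0" if "lk m 0 = 0" "m \<in> ks a"
    using polys_inD[OF a[unfolded ktset_def] that(2)] that(1)
    by (intro poly_mapping_eqI) (auto simp: in_keys_iff)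
  then show "lk (t_to_0 a) m = lk (Poly_Mapping.single 0 (lk a 0)) m"
    by (auto simp: lookup_t_to_0 lookup_single when_def in_keys_iff)
qed

lemma ktset_Sset: "a \<in> ktset \<Longrightarrow> a \<in> Sset r"
  unfolding ktset_def Sset_def by (erule polys_in_mono) auto

lemma tpow_Sset: "tpow k \<in> Sset r"
  unfolding Sset_def by (rule polys_in_tpow) simp

lemma Sset_mult: "a \<in> Sset r \<Longrightarrow> b \<in> Sset r \<Longrightarrow> a * (b::'k::comm_semiring_1 mpoly) \<in> Sset r"
  unfolding Sset_def by (rule polys_in_mult)

lemma contract_const: "contract (Poly_Mapping.single 0 v) F = Poly_Mapping.single 0 v * F"
  by (rule poly_mapping_eqI) (simp add: lookup_contract_single lookup_scal)

definition sc :: "'k::field \<Rightarrow> 'k mpoly \<Rightarrow> 'k mpoly" where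
  "sc c p = Poly_Mapping.single 0 c * p"

interpretation vs: vector_space "sc :: 'k::field \<Rightarrow> 'k mpoly \<Rightarrow> 'k mpoly"
  by unfold_locales (simp_all add: sc_def distrib_left distrib_right single_add mult_single mult.assoc[symmetric])

interpretation vsp: vector_space_pair "sc :: 'k::field \<Rightarrow> 'k mpoly \<Rightarrow> 'k mpoly" "sc :: 'k::field \<Rightarrow> 'k mpoly \<Rightarrow> 'k mpoly"
  by unfold_locales

lemma lookup_sc: "lk (sc c p) m = c * lk p m"
  by (simp add: sc_def lookup_scal)

lemma contract_sc_left: "contract (sc c h) F = sc c (contract h (F::'k::field mpoly))"
  by (simp add: sc_def contract_mult contract_const)

lemma Rset_sc: "h \<in> Rset r \<Longrightarrow> sc c h \<in> Rset r"
  unfolding sc_def Rset_def by (intro polys_in_mult polys_in_const)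

lemma Rset_add: "a \<in> Rset r \<Longrightarrow> b \<in> Rset r \<Longrightarrow> a + b \<in> Rset r"
  unfolding Rset_def by (rule polys_in_add)

lemma Rset_diff: "a \<in> Rset r \<Longrightarrow> b \<in> Rset r \<Longrightarrow> a - (b::'k::field mpoly) \<in> Rset r"
  unfolding Rset_def by (rule polys_in_diff)

lemma Rset_sum: "(\<And>x. x \<in> A \<Longrightarrow> h x \<in> Rset r) \<Longrightarrow> sum h A \<in> Rset r"
  unfolding Rset_def by (rule polys_in_sum)

lemma W_subspace: "vs.subspace ((\<lambda>h. contract h (FB::'k::field mpoly)) ` Rset r)"
proof (rule vs.subspaceI)
  show "0 \<in> (\<lambda>h. contract h FB) ` Rset r"
    by (rule image_eqI[of _ _ 0]) (auto simp: Rset_def)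
  show "x + y \<in> (\<lambda>h. contract h FB) ` Rset r" if "x \<in> (\<lambda>h. contract h FB) ` Rset r" "y \<in> (\<lambda>h. contract h FB) ` Rset r" for x y
    using that by (auto simp: contract_add_left[symmetric] intro!: imageI Rset_add)
  show "sc c x \<in> (\<lambda>h. contract h FB) ` Rset r" if "x \<in> (\<lambda>h. contract h FB) ` Rset r" for c x
    using that by (auto simp: contract_sc_left[symmetric] intro!: imageI Rset_sc)
qed

lemma finite_divisors: "finite {c::nat\<Rightarrow>\<^sub>0nat. \<exists>a. a + c = m}"
proof -
  let ?S = "{c::nat\<Rightarrow>\<^sub>0nat. \<exists>a. a + c = m}"
  let ?f = "\<lambda>c. restrict (lk c) (ks m)"
  have le: "lk c i \<le> lk m i" if "c \<in> ?S" for c i using that by (auto simp: lookup_add)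
  have "inj_on ?f ?S"
  proof (rule inj_onI)
    fix c d assume c: "c \<in> ?S" and d: "d \<in> ?S" and eq: "?f c = ?f d"
    show "c = d"
    proof (rule poly_mapping_eqI)
      fix i show "lk c i = lk d i"
      proof (cases "i \<in> ks m")
        case True then show ?thesis using fun_cong[OF eq, of i] by simp
      next
        case False then show ?thesis using le[OF c, of i] le[OF d, of i] by (simp add: in_keys_iff)
      qed
    qed
  qed
  moreover have "?f ` ?S \<subseteq> PiE (ks m) (\<lambda>i. {..lk m i})"
    using le by auto
  moreover have "finite (PiE (ks m) (\<lambda>i. {..lk m i}))"
    by (intro finite_PiE) auto
  ultimately show ?thesis
    by (meson finite_imageD finite_subset)
qed

lemma duality:
  fixes FB Phi :: "'k::field mpoly"
  assumes FB: "FB \<in> Rset r" and Phi: "Phi \<in> Rset r"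
    and ann: "\<forall>f\<in>Ann {1..r} FB. contract f Phi = 0"
  shows "Phi \<in> (\<lambda>h. contract h FB) ` Rset r"
proof (rule ccontr)
  define W where "W = (\<lambda>h. contract h FB) ` Rset r"
  assume "Phi \<notin> (\<lambda>h. contract h FB) ` Rset r"
  hence nW: "Phi \<notin> W" by (simp add: W_def)
  have subW: "vs.subspace W" unfolding W_def by (rule W_subspace)
  obtain BW where BW: "BW \<subseteq> W" "vs.independent BW" "W \<subseteq> vs.span BW"
    by (rule vs.basis_exists)
  have spanW: "vs.span BW \<subseteq> W" by (rule vs.span_minimal[OF BW(1) subW])
  have nspan: "Phi \<notin> vs.span BW" using spanW nW by blast
  have ind: "vs.independent (insert Phi BW)" by (rule vs.independent_insertI[OF nspan BW(2)])
  define L where "L = vsp.construct (insert Phi BW) (\<lambda>x. if x = Phi then 1 else 0)"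
  have linL: "Vector_Spaces.linear sc sc L" unfolding L_def by (rule vsp.linear_construct[OF ind])
  have LPhi: "L Phi = 1" unfolding L_def using vsp.construct_basis[OF ind, of Phi] by simp
  have LB: "L b = 0" if "b \<in> BW" for b
  proof -
    have "b \<noteq> Phi" using that nspan vs.span_base by blast
    then show ?thesis unfolding L_def using vsp.construct_basis[OF ind, of b] that by simp
  qed
  have LW: "L w = 0" if "w \<in> W" for w
    using vsp.linear_eq_0_on_span[OF linL LB] BW(3) that by blast
  define ell where "ell v = lk (L v) 0" for v
  define D where "D = (\<Union>m\<in>ks FB. {c::nat\<Rightarrow>\<^sub>0nat. \<exists>a. a + c = m}) \<union> ks Phi"
  have finD: "finite D" unfolding D_def using finite_divisors by auto
  have Dvars: "ks c \<subseteq> {1..r}" if "c \<in> D" for c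
  proof -
    { fix a m assume "m \<in> ks FB" "a + c = m"
      then have "ks (a + c) \<subseteq> {1..r}" using polys_inD[OF FB[unfolded Rset_def]] by blast
      then have "ks c \<subseteq> {1..r}" by (simp add: keys_add_nat) }
    then show ?thesis using that polys_inD[OF Phi[unfolded Rset_def]] unfolding D_def by blast
  qed
  define f where "f = (\<Sum>a\<in>D. Poly_Mapping.single a (ell (Poly_Mapping.single a 1)))"
  have lkf: "lk f a = (if a \<in> D then ell (Poly_Mapping.single a 1) else 0)" for a
    unfolding f_def by (simp add: lookup_sum lookup_single when_def finD)
  have ksf: "ks f \<subseteq> D" by (auto simp: in_keys_iff lkf split: if_splits)
  have pairing: "(\<Sum>a\<in>D. lk f a * lk v a) = ell v" if "ks v \<subseteq> D" for v
  proof -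
    have v: "v = (\<Sum>a\<in>D. sc (lk v a) (Poly_Mapping.single a 1))"
    proof (rule poly_mapping_eqI)
      fix m
      have "lk (\<Sum>a\<in>D. sc (lk v a) (Poly_Mapping.single a 1)) m = (\<Sum>a\<in>D. if a = m then lk v a else 0)"
        by (simp add: lookup_sum lookup_sc lookup_single when_def if_distrib cong: if_cong)
      also have "\<dots> = lk v m" using that finD by (auto simp: in_keys_iff)
      finally show "lk v m = lk (\<Sum>a\<in>D. sc (lk v a) (Poly_Mapping.single a 1)) m" by simp
    qed
    have "L v = (\<Sum>a\<in>D. sc (lk v a) (L (Poly_Mapping.single a 1)))"
      by (subst v) (simp add: vsp.linear_sum[OF linL] vsp.linear_scale[OF linL])
    then have "ell v = (\<Sum>a\<in>D. lk v a * ell (Poly_Mapping.single a 1))"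
      by (simp add: ell_def lookup_sum lookup_sc)
    also have "\<dots> = (\<Sum>a\<in>D. lk f a * lk v a)" by (intro sum.cong) (auto simp: lkf)
    finally show ?thesis by simp
  qed
  have fR: "f \<in> Rset r" unfolding Rset_def using ksf Dvars by (intro polys_inI) blast
  have "contract f FB = 0"
  proof (rule poly_mapping_eqI)
    fix c
    define wc where "wc = contract (Poly_Mapping.single c 1) FB"
    have lkwc: "lk wc a = lk FB (a + c)" for a by (simp add: wc_def lookup_contract_single add.commute)
    have kswc: "ks wc \<subseteq> D"
    proof
      fix a assume "a \<in> ks wc"
      hence "a + c \<in> ks FB" by (simp add: in_keys_iff lkwc)
      thus "a \<in> D" unfolding D_def by (auto intro!: exI[of _ c] simp: add.commute)
    qed
    have wcW: "wc \<in> W"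
    proof (cases "ks c \<subseteq> {1..r}")
      case True
      hence "Poly_Mapping.single c 1 \<in> Rset r" unfolding Rset_def by (rule polys_in_single)
      thus ?thesis unfolding W_def wc_def by blast
    next
      case False
      have "lk FB (a + c) = 0" for a
      proof (rule ccontr)
        assume "lk FB (a + c) \<noteq> 0"
        hence "ks (a + c) \<subseteq> {1..r}" using polys_inD[OF FB[unfolded Rset_def]] by (simp add: in_keys_iff)
        thus False using False by (auto simp: keys_add_nat)
      qed
      hence "wc = 0" by (intro poly_mapping_eqI) (simp add: lkwc)
      moreover have "0 \<in> W" using subW vs.subspace_0 by blast
      ultimately show ?thesis by simp
    qed
    have "lk (contract f FB) c = (\<Sum>a\<in>D. lk f a * lk FB (a + c))"
      by (rule lookup_contract_sup[OF finD ksf])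
    also have "\<dots> = (\<Sum>a\<in>D. lk f a * lk wc a)" by (simp add: lkwc)
    also have "\<dots> = ell wc" by (rule pairing[OF kswc])
    also have "\<dots> = 0" using LW[OF wcW] by (simp add: ell_def)
    finally show "lk (contract f FB) c = lk 0 c" by simp
  qed
  with fR have "f \<in> Ann {1..r} FB" unfolding Ann_def Rset_def by auto
  hence "contract f Phi = 0" using ann by blast
  hence "lk (contract f Phi) 0 = 0" by simp
  moreover have "lk (contract f Phi) 0 = ell Phi"
    using lookup_contract_sup[OF finD ksf, of Phi 0] pairing[of Phi] by (simp add: D_def)
  moreover have "ell Phi = 1" by (simp add: ell_def LPhi)
  ultimately show False by simp
qed

lemma quot_basis:
  fixes FB :: "'k::field mpoly"
  assumes FB: "FB \<in> Rset r"
  shows "\<exists>Bs'. Bs' \<subseteq> Rset r \<and>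
    (\<forall>g\<in>Rset r. \<exists>B0 c. finite B0 \<and> B0 \<subseteq> Bs' \<and> g - (\<Sum>b\<in>B0. sc (c b) b) \<in> Ann {1..r} FB) \<and>
    (\<forall>B0 c. finite B0 \<and> B0 \<subseteq> Bs' \<and> (\<Sum>b\<in>B0. sc (c b) b) \<in> Ann {1..r} FB \<longrightarrow> (\<forall>b\<in>B0. c b = 0))"
proof -
  define W where "W = (\<lambda>h. contract h FB) ` Rset r"
  have subW: "vs.subspace W" unfolding W_def by (rule W_subspace)
  obtain BW where BW: "BW \<subseteq> W" "vs.independent BW" "W \<subseteq> vs.span BW"
    by (rule vs.basis_exists)
  define pre where "pre w = (SOME h. h \<in> Rset r \<and> contract h FB = w)" for w
  have pre: "pre w \<in> Rset r \<and> contract (pre w) FB = w" if "w \<in> W" for w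
    unfolding pre_def by (rule someI_ex) (use that in \<open>auto simp: W_def\<close>)
  have injpre: "inj_on pre BW"
    by (rule inj_onI) (metis BW(1) pre subsetD)
  have AnnIff: "x \<in> Ann {1..r} FB \<longleftrightarrow> x \<in> Rset r \<and> contract x FB = 0" for x
    unfolding Ann_def Rset_def by auto
  have sumR: "(\<Sum>b\<in>B0. sc (c b) b) \<in> Rset r" if "B0 \<subseteq> pre ` BW" for B0 c
    using that pre BW(1) by (intro Rset_sum Rset_sc) auto
  have reidx: "(\<Sum>b\<in>pre ` T. sc (c b) b) = (\<Sum>w\<in>T. sc (c (pre w)) (pre w))" if "T \<subseteq> BW" for T c
    using injpre that by (subst sum.reindex) (auto intro: inj_on_subset)
  have contr: "contract (\<Sum>w\<in>T. sc (u w) (pre w)) FB = (\<Sum>w\<in>T. sc (u w) w)" if "T \<subseteq> BW" for T u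
    using that pre BW(1) by (auto simp: contract_sum_left contract_sc_left intro!: sum.cong)
  have P1: "pre ` BW \<subseteq> Rset r" using pre BW(1) by auto
  have P2: "\<exists>B0 c. finite B0 \<and> B0 \<subseteq> pre ` BW \<and> g - (\<Sum>b\<in>B0. sc (c b) b) \<in> Ann {1..r} FB"
    if g: "g \<in> Rset r" for g
  proof -
    have "contract g FB \<in> vs.span BW" using g BW(3) unfolding W_def by blast
    then obtain T u where T: "finite T" "T \<subseteq> BW" "contract g FB = (\<Sum>w\<in>T. sc (u w) w)"
      unfolding vs.span_explicit by blast
    define c where "c b = u (inv_into T pre b)" for b
    have eq: "(\<Sum>b\<in>pre ` T. sc (c b) b) = (\<Sum>w\<in>T. sc (u w) (pre w))"
      unfolding reidx[OF T(2)] c_def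
      using inv_into_f_f[OF inj_on_subset[OF injpre T(2)]] by (intro sum.cong) auto
    have preR: "pre x \<in> Rset r" if "x \<in> T" for x using that T(2) BW(1) pre by blast
    have "g - (\<Sum>b\<in>pre ` T. sc (c b) b) \<in> Ann {1..r} FB"
      unfolding AnnIff eq using g T preR
      by (auto intro!: Rset_diff Rset_sum Rset_sc simp: contract_diff_left contr[OF T(2)])
    then show ?thesis
      using T by (intro exI[of _ "pre ` T"] exI[of _ c]) auto
  qed
  have P3: "c b = 0" if a: "finite B0 \<and> B0 \<subseteq> pre ` BW \<and> (\<Sum>b\<in>B0. sc (c b) b) \<in> Ann {1..r} FB" and b: "b \<in> B0" for B0 c b
  proof -
    define T where "T = {w\<in>BW. pre w \<in> B0}"
    have TB: "T \<subseteq> BW" by (auto simp: T_def)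
    have imT: "pre ` T = B0" using a by (auto simp: T_def)
    have finT: "finite T" using a imT inj_on_subset[OF injpre TB] finite_imageD by metis
    have "contract (\<Sum>b\<in>B0. sc (c b) b) FB = 0" using a AnnIff by blast
    hence "(\<Sum>w\<in>T. sc (c (pre w)) w) = 0"
      using reidx[OF TB, of c] contr[OF TB, of "\<lambda>w. c (pre w)"] imT by simp
    hence "\<forall>w\<in>T. c (pre w) = 0" using vs.independentD[OF BW(2) finT TB, of "\<lambda>w. c (pre w)"] by blast
    then show "c b = 0" using b imT by auto
  qed
  have P2': "\<forall>g\<in>Rset r. \<exists>B0 c. finite B0 \<and> B0 \<subseteq> pre ` BW \<and> g - (\<Sum>b\<in>B0. sc (c b) b) \<in> Ann {1..r} FB"
    using P2 by blast
  have P3': "\<forall>B0 c. finite B0 \<and> B0 \<subseteq> pre ` BW \<and> (\<Sum>b\<in>B0. sc (c b) b) \<in> Ann {1..r} FB \<longrightarrow> (\<forall>b\<in>B0. c b = 0)"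
    by (intro allI impI ballI) (rule P3)
  show ?thesis
    apply (intro exI[of _ "pre ` BW"] conjI)
      apply (rule P1)
     apply (rule P2')
    apply (rule P3')
    done
qed

locale cset =
  fixes r n :: nat and FB G :: "'k::field mpoly"
  assumes n2: "n \<ge> 2" and FB: "FB \<in> Rset r" and G: "G \<in> Rset r"
begin

definition "F = tpow (n - 1) * FB + G"
definition "J = Ann {0..r} F"
definition "IB = Ann {1..r} FB"

lemma noT_FB: "noT FB" using Rset_noT[OF FB] .
lemma noT_G: "noT G" using Rset_noT[OF G] .

lemma contract_tpow_G: "k \<ge> 1 \<Longrightarrow> contract (tpow k) G = 0"
  using contract_tpow_tpow[OF noT_G, of k 0] by simp

lemma contract_tpow_F: "k \<ge> 1 \<Longrightarrow> contract (tpow k) F = (if k \<le> n - 1 then tpow (n - 1 - k) * FB else 0)"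
  by (simp add: F_def contract_add_right contract_tpow_G contract_tpow_tpow[OF noT_FB])

lemma contract_noT_F: "noT g \<Longrightarrow> contract g F = tpow (n-1) * contract g FB + contract g G"
  by (simp add: F_def contract_add_right contract_noT_tpow)

lemma J_iff: "j \<in> J \<longleftrightarrow> j \<in> Sset r \<and> contract j F = 0"
  unfolding J_def Ann_def Sset_def by auto

lemma IB_iff: "e \<in> IB \<longleftrightarrow> e \<in> Rset r \<and> contract e FB = 0"
  unfolding IB_def Ann_def Rset_def by auto

lemma J_mult: "j \<in> J \<Longrightarrow> x \<in> Sset r \<Longrightarrow> x * j \<in> J"
  by (auto simp: J_iff Sset_mult contract_mult)

lemma J_0: "0 \<in> J" by (simp add: J_iff Sset_def)

lemma J_add: "a \<in> J \<Longrightarrow> b \<in> J \<Longrightarrow> a + b \<in> J"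
  by (auto simp: J_iff Sset_def polys_in_add contract_add_left)

lemma J_diff: "a \<in> J \<Longrightarrow> b \<in> J \<Longrightarrow> a - b \<in> J"
  by (auto simp: J_iff Sset_def polys_in_diff contract_diff_left)

lemma J_tpow_n: "x \<in> Sset r \<Longrightarrow> tpow n * x \<in> J"
proof -
  assume x: "x \<in> Sset r"
  have "contract (tpow n * x) F = contract x (contract (tpow n) F)"
    by (metis contract_mult mult.commute)
  also have "\<dots> = 0" using n2 by (subst contract_tpow_F) auto
  finally show ?thesis using x by (simp add: J_iff Sset_mult tpow_Sset)
qed

lemma J_IB: "e \<in> IB \<Longrightarrow> k \<ge> 1 \<Longrightarrow> tpow k * e \<in> J"
proof -
  assume e: "e \<in> IB" and k: "k \<ge> 1"
  have eR: "e \<in> Rset r" "contract e FB = 0" using e by (auto simp: IB_iff)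
  have "contract (tpow k * e) F = contract e (contract (tpow k) F)"
    by (metis contract_mult mult.commute)
  also have "\<dots> = 0" using k eR by (simp add: contract_tpow_F contract_noT_tpow Rset_noT)
  finally show ?thesis using eR by (simp add: J_iff Sset_mult tpow_Sset Rset_Sset)
qed

lemma J_corr:
  assumes e: "e \<in> IB" and h: "h \<in> Rset r" and eq: "contract e G = contract h FB"
  shows "e - tpow (n-1) * h \<in> J"
proof -
  have eR: "e \<in> Rset r" "contract e FB = 0" using e by (auto simp: IB_iff)
  have "contract (tpow (n-1) * h) F = contract h (contract (tpow (n-1)) F)"
    by (metis contract_mult mult.commute)
  also have "\<dots> = contract h FB" using n2 by (simp add: contract_tpow_F)
  finally have 1: "contract (tpow (n-1) * h) F = contract h FB" .
  have 2: "contract e F = contract e G"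
    using eR by (simp add: contract_noT_F Rset_noT)
  have "e - tpow (n-1) * h \<in> Sset r"
    using eR h unfolding Sset_def by (intro polys_in_diff polys_in_mult) (auto simp: Sset_def[symmetric] Rset_Sset tpow_Sset)
  then show ?thesis using 1 2 eq
    by (simp add: J_iff contract_diff_left)
qed

lemma J_top:
  assumes g: "g \<in> Rset r" and j: "tpow (n-1) * g \<in> J"
  shows "g \<in> IB"
proof -
  have "contract (tpow (n-1) * g) F = contract g (contract (tpow (n-1)) F)"
    by (metis contract_mult mult.commute)
  also have "\<dots> = contract g FB" using n2 by (simp add: contract_tpow_F)
  finally show ?thesis using j g by (simp add: J_iff IB_iff)
qed

lemma t_to_0_tpow1: "t_to_0 (tpow (Suc k) * u) = (0::'k mpoly)"
  by (rule poly_mapping_eqI) (simp add: lookup_t_to_0 lookup_tpow_mult)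

lemma cond3_back:
  assumes s: "s \<in> Sset r" and u: "u \<in> Sset r" and j: "s - tpow 1 * u \<in> J"
  shows "t_to_0 s \<in> IB"
proof -
  define jj where "jj = s - tpow 1 * u"
  have jjS: "jj \<in> Sset r" using j by (simp add: jj_def J_iff)
  have "tpow (n-1) * jj \<in> J" using J_mult[OF j tpow_Sset] by (simp add: jj_def)
  moreover have "tpow (n-1) * jj = tpow (n-1) * t_to_0 jj + tpow n * contract (tpow 1) jj"
  proof -
    have "tpow (n-1) * jj = tpow (n-1) * (t_to_0 jj + tpow 1 * contract (tpow 1) jj)"
      using t_to_0_decomp[of jj] by simp
    also have "\<dots> = tpow (n-1) * t_to_0 jj + (tpow (n-1) * tpow 1) * contract (tpow 1) jj"
      by (simp add: distrib_left mult.assoc)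
    also have "tpow (n-1) * tpow 1 = (tpow n :: 'k mpoly)" using n2 by (simp add: tpow_mult)
    finally show ?thesis .
  qed
  moreover have "contract (tpow 1) jj \<in> Sset r"
    using jjS unfolding Sset_def by (rule polys_in_contract)
  ultimately have "tpow (n-1) * t_to_0 jj \<in> J"
    by (metis J_diff J_tpow_n add_diff_cancel_right')
  moreover have "t_to_0 jj \<in> Rset r"
    using jjS unfolding Sset_def Rset_def by (rule polys_in_t_to_0)
  ultimately have "t_to_0 jj \<in> IB" by (rule J_top[rotated])
  moreover have "t_to_0 jj = t_to_0 s" by (simp add: jj_def t_to_0_diff t_to_0_tpow1)
  ultimately show ?thesis by simp
qed

lemma forward:
  assumes c3: "\<forall>s\<in>Sset r. t_to_0 s \<in> IB \<longrightarrow> (\<exists>u\<in>Sset r. s - tpow 1 * u \<in> J)"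
    and e: "e \<in> IB"
  shows "\<exists>h. contract e G = contract h FB"
proof -
  have eR: "e \<in> Rset r" "contract e FB = 0" using e by (auto simp: IB_iff)
  have eS: "e \<in> Sset r" using eR Rset_Sset by blast
  have "t_to_0 e = e" using Rset_noT[OF eR(1)] by (rule t_to_0_noT)
  then obtain u where u: "u \<in> Sset r" "e - tpow 1 * u \<in> J" using c3 eS e by auto
  have 1: "contract e F = contract e G" using eR by (simp add: contract_noT_F Rset_noT)
  have "contract (tpow 1 * u) F = contract u (contract (tpow 1) F)"
    by (metis contract_mult mult.commute)
  also have "\<dots> = contract u (tpow (n-2) * FB)" using n2 by (subst contract_tpow_F) (auto simp: numeral_2_eq_2)
  finally have 2: "contract (tpow 1 * u) F = contract u (tpow (n-2) * FB)" .
  have "contract (e - tpow 1 * u) F = 0" using u(2) by (simp add: J_iff)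
  hence X: "contract e G = contract u (tpow (n-2) * FB)"
    using 1 2 by (simp add: contract_diff_left)
  define u2 where "u2 = contract (tpow (n-2)) u"
  define low where "low = u - tpow (n-2) * u2"
  have ud: "u = low + tpow (n-2) * u2" by (simp add: low_def)
  have "contract (tpow (n-2) * u2) (tpow (n-2) * FB) = contract u2 (contract (tpow (n-2)) (tpow (n-2) * FB))"
    by (metis contract_mult mult.commute)
  also have "\<dots> = contract u2 FB" by (simp add: contract_tpow_tpow[OF noT_FB])
  finally have 3: "contract (tpow (n-2) * u2) (tpow (n-2) * FB) = contract u2 FB" .
  have 4: "t_to_0 (contract low (tpow (n-2) * FB)) = 0"
    unfolding low_def u2_def by (rule t_to_0_low[OF low_decomp])
  have "contract e G = t_to_0 (contract e G)"
    by (rule t_to_0_noT[symmetric], rule noT_contract[OF noT_G])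
  also have "\<dots> = t_to_0 (contract low (tpow (n-2) * FB)) + t_to_0 (contract u2 FB)"
    unfolding X by (subst ud) (simp add: contract_add_left t_to_0_add 3)
  also have "\<dots> = contract u2 FB"
    using 4 t_to_0_noT[OF noT_contract[OF noT_FB]] by simp
  finally show ?thesis by blast
qed

lemma sq_lemma:
  assumes H: "\<forall>e\<in>IB. \<exists>h. contract e G = contract h FB"
  shows "\<forall>p\<in>ideal_sq IB. contract p G = 0"
proof -
  have *: "\<forall>gs. length fs = length gs \<and> set fs \<subseteq> IB \<and> set gs \<subseteq> IB \<longrightarrow>
      contract (sum_list (map2 (*) fs gs)) G = 0" for fs
  proof (induct fs)
    case Nil then show ?case by simp
  next
    case (Cons f fs)
    show ?case
    proof (intro allI impI)
      fix gs assume a: "length (f # fs) = length gs \<and> set (f # fs) \<subseteq> IB \<and> set gs \<subseteq> IB"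
      then obtain g gs' where gs: "gs = g # gs'" by (cases gs) auto
      have fI: "f \<in> IB" and gI: "g \<in> IB" using a gs by auto
      obtain h where h: "contract g G = contract h FB" using H gI by blast
      have "contract (f * g) G = contract h (contract f FB)"
        by (simp add: contract_mult h contract_comm)
      also have "\<dots> = 0" using fI by (simp add: IB_iff)
      finally have "contract (f * g) G = 0" .
      moreover have "contract (sum_list (map2 (*) fs gs')) G = 0"
        using Cons a gs by auto
      ultimately show "contract (sum_list (map2 (*) (f # fs) gs)) G = 0"
        by (simp add: gs contract_add_left)
    qed
  qed
  show ?thesis unfolding ideal_sq_def using * by blast
qed

end


context cset begin


lemma ktset_add: "a \<in> ktset \<Longrightarrow> b \<in> ktset \<Longrightarrow> a + b \<in> ktset"
  unfolding ktset_def by (rule polys_in_add)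

lemma ktset_0: "0 \<in> ktset" unfolding ktset_def by simp

lemma ktset_tc: fixes v :: "'k" shows "tpow k * Poly_Mapping.single 0 v \<in> ktset"
  unfolding ktset_def by (intro polys_in_mult polys_in_tpow polys_in_const) simp

lemma Sset_add: "a \<in> Sset r \<Longrightarrow> b \<in> Sset r \<Longrightarrow> a + b \<in> Sset r"
  unfolding Sset_def by (rule polys_in_add)

lemma Sset_sum: "(\<And>x. x \<in> A \<Longrightarrow> h x \<in> Sset r) \<Longrightarrow> sum h A \<in> Sset r"
  unfolding Sset_def by (rule polys_in_sum)

lemma backward:
  assumes H: "\<forall>p\<in>ideal_sq IB. contract p G = 0"
  shows "free_extension r n J IB"
proof -
  have A: "\<exists>h\<in>Rset r. contract e G = contract h FB" if e: "e \<in> IB" for e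
  proof -
    have eR: "e \<in> Rset r" using e by (simp add: IB_iff)
    have PhiR: "contract e G \<in> Rset r" using G unfolding Rset_def by (rule polys_in_contract)
    have "\<forall>f\<in>Ann {1..r} FB. contract f (contract e G) = 0"
    proof
      fix f assume f: "f \<in> Ann {1..r} FB"
      have "f * e \<in> ideal_sq IB" unfolding ideal_sq_def using f e
        by (intro CollectI exI[of _ "[f]"] exI[of _ "[e]"]) (simp add: IB_def)
      then show "contract f (contract e G) = 0" using H contract_mult[of f e G] by simp
    qed
    from duality[OF FB PhiR this] show ?thesis by auto
  qed
  from quot_basis[OF FB] obtain Bs where Bs: "Bs \<subseteq> Rset r \<and>
    (\<forall>g\<in>Rset r. \<exists>B0 c. finite B0 \<and> B0 \<subseteq> Bs \<and> g - (\<Sum>b\<in>B0. sc (c b) b) \<in> Ann {1..r} FB) \<and>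
    (\<forall>B0 c. finite B0 \<and> B0 \<subseteq> Bs \<and> (\<Sum>b\<in>B0. sc (c b) b) \<in> Ann {1..r} FB \<longrightarrow> (\<forall>b\<in>B0. c b = 0))" ..
  have BsR: "Bs \<subseteq> Rset r" using Bs by (rule conjunct1)
  have Span: "\<forall>g\<in>Rset r. \<exists>B0 c. finite B0 \<and> B0 \<subseteq> Bs \<and> g - (\<Sum>b\<in>B0. sc (c b) b) \<in> IB"
    using Bs[THEN conjunct2, THEN conjunct1] unfolding IB_def .
  have Indep: "\<forall>B0 c. finite B0 \<and> B0 \<subseteq> Bs \<and> (\<Sum>b\<in>B0. sc (c b) b) \<in> IB \<longrightarrow> (\<forall>b\<in>B0. c b = 0)"
    using Bs[THEN conjunct2, THEN conjunct2] unfolding IB_def .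
  have BsS: "b \<in> Sset r" if "b \<in> Bs" for b using that BsR Rset_Sset by blast
  define good where "good s \<longleftrightarrow> (\<exists>B0 a. finite B0 \<and> B0 \<subseteq> Bs \<and> (\<forall>b\<in>B0. a b \<in> ktset)
              \<and> s - (\<Sum>b\<in>B0. a b * b) \<in> J)" for s
  have good_add: "good (x + y)" if "good x" "good y" for x y
  proof -
    from that(1) have "\<exists>B0 a. finite B0 \<and> B0 \<subseteq> Bs \<and> (\<forall>b\<in>B0. a b \<in> ktset) \<and> x - (\<Sum>b\<in>B0. a b * b) \<in> J"
      by (simp only: good_def)
    then obtain B1 where "\<exists>a1. finite B1 \<and> B1 \<subseteq> Bs \<and> (\<forall>b\<in>B1. a1 b \<in> ktset) \<and> x - (\<Sum>b\<in>B1. a1 b * b) \<in> J" ..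
    then obtain a1 where 1: "finite B1 \<and> B1 \<subseteq> Bs \<and> (\<forall>b\<in>B1. a1 b \<in> ktset) \<and> x - (\<Sum>b\<in>B1. a1 b * b) \<in> J" ..
    from that(2) have "\<exists>B0 a. finite B0 \<and> B0 \<subseteq> Bs \<and> (\<forall>b\<in>B0. a b \<in> ktset) \<and> y - (\<Sum>b\<in>B0. a b * b) \<in> J"
      by (simp only: good_def)
    then obtain B2 where "\<exists>a2. finite B2 \<and> B2 \<subseteq> Bs \<and> (\<forall>b\<in>B2. a2 b \<in> ktset) \<and> y - (\<Sum>b\<in>B2. a2 b * b) \<in> J" ..
    then obtain a2 where 2: "finite B2 \<and> B2 \<subseteq> Bs \<and> (\<forall>b\<in>B2. a2 b \<in> ktset) \<and> y - (\<Sum>b\<in>B2. a2 b * b) \<in> J" ..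
    define a where "a b = (if b \<in> B1 then a1 b else 0) + (if b \<in> B2 then a2 b else 0)" for b
    have s1: "(\<Sum>b\<in>B1 \<union> B2. (if b \<in> B1 then a1 b else 0) * b) = (\<Sum>b\<in>B1. a1 b * b)"
      using 1 2 by (intro sum.mono_neutral_cong_right) auto
    have s2: "(\<Sum>b\<in>B1 \<union> B2. (if b \<in> B2 then a2 b else 0) * b) = (\<Sum>b\<in>B2. a2 b * b)"
      using 1 2 by (intro sum.mono_neutral_cong_right) auto
    have "(\<Sum>b\<in>B1 \<union> B2. a b * b) = (\<Sum>b\<in>B1 \<union> B2. (if b \<in> B1 then a1 b else 0) * b + (if b \<in> B2 then a2 b else 0) * b)"
      unfolding a_def by (simp only: distrib_right)
    also have "\<dots> = (\<Sum>b\<in>B1. a1 b * b) + (\<Sum>b\<in>B2. a2 b * b)"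
      by (simp only: sum.distrib s1 s2)
    finally have "x + y - (\<Sum>b\<in>B1 \<union> B2. a b * b) = (x - (\<Sum>b\<in>B1. a1 b * b)) + (y - (\<Sum>b\<in>B2. a2 b * b))"
      by (simp add: algebra_simps)
    moreover have "(x - (\<Sum>b\<in>B1. a1 b * b)) + (y - (\<Sum>b\<in>B2. a2 b * b)) \<in> J"
      using 1 2 by (intro J_add) auto
    ultimately have "x + y - (\<Sum>b\<in>B1 \<union> B2. a b * b) \<in> J" by (simp only:)
    moreover have "a b \<in> ktset" if "b \<in> B1 \<union> B2" for b
      unfolding a_def using 1 2 that by (intro ktset_add) (auto simp: ktset_0)
    ultimately show ?thesis unfolding good_def using 1 2
      by (intro exI[of _ "B1 \<union> B2"] exI[of _ a]) auto
  qed
  have good_J: "good j" if "j \<in> J" for j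
    unfolding good_def using that by (intro exI[of _ "{}"]) auto
  have good_sum: "good (sum h A)" if "finite A" "\<forall>x\<in>A. good (h x)" for h and A :: "'z set"
    using that by (induct A rule: finite_induct) (auto intro: good_add good_J J_0)
  have good_comb: "good (\<Sum>b\<in>B0. sc (c b) b)" if "finite B0" "B0 \<subseteq> Bs" for B0 c
  proof -
    have "(\<Sum>b\<in>B0. sc (c b) b) - (\<Sum>b\<in>B0. Poly_Mapping.single 0 (c b) * b) = 0"
      by (simp add: sc_def)
    then show ?thesis unfolding good_def using that J_0 ktset_tc[of 0]
      by (intro exI[of _ B0] exI[of _ "\<lambda>b. Poly_Mapping.single 0 (c b)"]) auto
  qed
  have good_tpow: "good (tpow k * g)" if g: "g \<in> Rset r" and k: "k \<ge> 1" for g k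
  proof -
    from Span g have "\<exists>B0 c. finite B0 \<and> B0 \<subseteq> Bs \<and> g - (\<Sum>b\<in>B0. sc (c b) b) \<in> IB" ..
    then obtain B0 where "\<exists>c. finite B0 \<and> B0 \<subseteq> Bs \<and> g - (\<Sum>b\<in>B0. sc (c b) b) \<in> IB" ..
    then obtain c where B0c: "finite B0 \<and> B0 \<subseteq> Bs \<and> g - (\<Sum>b\<in>B0. sc (c b) b) \<in> IB" ..
    have B0: "finite B0" "B0 \<subseteq> Bs" "g - (\<Sum>b\<in>B0. sc (c b) b) \<in> IB" using B0c by auto
    have "tpow k * g - (\<Sum>b\<in>B0. (tpow k * Poly_Mapping.single 0 (c b)) * b) = tpow k * (g - (\<Sum>b\<in>B0. sc (c b) b))"
      by (simp add: sc_def right_diff_distrib sum_distrib_left mult.assoc)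
    also have "\<dots> \<in> J" using J_IB[OF B0(3) k] .
    finally show ?thesis unfolding good_def using B0 ktset_tc
      by (intro exI[of _ B0] exI[of _ "\<lambda>b. tpow k * Poly_Mapping.single 0 (c b)"]) auto
  qed
  have good_R: "good g" if g: "g \<in> Rset r" for g
  proof -
    from Span g have "\<exists>B0 c. finite B0 \<and> B0 \<subseteq> Bs \<and> g - (\<Sum>b\<in>B0. sc (c b) b) \<in> IB" ..
    then obtain B0 where "\<exists>c. finite B0 \<and> B0 \<subseteq> Bs \<and> g - (\<Sum>b\<in>B0. sc (c b) b) \<in> IB" ..
    then obtain c where B0c: "finite B0 \<and> B0 \<subseteq> Bs \<and> g - (\<Sum>b\<in>B0. sc (c b) b) \<in> IB" ..
    have B0: "finite B0" "B0 \<subseteq> Bs" "g - (\<Sum>b\<in>B0. sc (c b) b) \<in> IB" using B0c by auto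
    define e where "e = g - (\<Sum>b\<in>B0. sc (c b) b)"
    have "e \<in> IB" using B0(3) by (simp add: e_def)
    from A[OF this] obtain h where h: "h \<in> Rset r" "contract e G = contract h FB" ..
    have eqg: "g = (\<Sum>b\<in>B0. sc (c b) b) + (e - tpow (n-1) * h) + tpow (n-1) * h"
      by (simp add: e_def)
    have gY: "good (e - tpow (n-1) * h)" using J_corr[OF _ h] B0(3) e_def good_J by simp
    have gZ: "good (tpow (n-1) * h)" using good_tpow[OF h(1)] n2 by simp
    have "good ((\<Sum>b\<in>B0. sc (c b) b) + (e - tpow (n-1) * h) + tpow (n-1) * h)"
      by (rule good_add[OF good_add[OF good_comb[OF B0(1,2)] gY] gZ])
    then show ?thesis using eqg by (simp only:)
  qed
  have good_mono: "good (Poly_Mapping.single m v)" if m: "ks m \<subseteq> {0..r}" for m v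
  proof -
    define k where "k = lk m 0"
    define m' where "m' = m - Poly_Mapping.single 0 k"
    have mm: "m = Poly_Mapping.single 0 k + m'" unfolding m'_def k_def by (rule split_mono) simp
    have m'0: "lk m' 0 = 0" by (simp add: m'_def k_def lookup_minus)
    have "ks m' \<subseteq> ks m" using mm by (simp add: keys_add_nat)
    have "ks m' \<subseteq> {1..r}"
    proof
      fix i assume i: "i \<in> ks m'"
      have "i \<in> {0..r}" using i \<open>ks m' \<subseteq> ks m\<close> m by blast
      moreover have "i \<noteq> 0" using i m'0 by (metis in_keys_iff)
      ultimately show "i \<in> {1..r}" by auto
    qed
    hence gR: "Poly_Mapping.single m' v \<in> Rset r" unfolding Rset_def by (rule polys_in_single)
    have eq: "Poly_Mapping.single m v = tpow k * Poly_Mapping.single m' v"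
      by (subst mm) (simp add: tpow_def mult_single)
    show ?thesis
    proof (cases "k = 0")
      case True then show ?thesis using eq good_R[OF gR] by simp
    next
      case False then show ?thesis using eq good_tpow[OF gR, of k] by simp
    qed
  qed
  have good_S: "good s" if s: "s \<in> Sset r" for s
  proof -
    have "good (\<Sum>m\<in>ks s. Poly_Mapping.single m (lk s m))"
      using s unfolding Sset_def by (intro good_sum) (auto intro!: good_mono dest: polys_inD)
    then show ?thesis using poly_expand[of s] by simp
  qed
  have indep_aux: "\<forall>b\<in>B0. \<exists>q\<in>ktset. a b = tpow k * q"
    if fin: "finite B0" and sub: "B0 \<subseteq> Bs" and "k \<le> n" "\<forall>b\<in>B0. a b \<in> ktset" "tpow (n-k) * (\<Sum>b\<in>B0. a b * b) \<in> J"
    for B0 k a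
    using that(3-)
  proof (induct k arbitrary: a)
    case 0 then show ?case by (intro ballI bexI[of _ "a b" for b]) auto
  next
    case (Suc k)
    define c where "c b = lk (a b) 0" for b
    define a' where "a' b = contract (tpow 1) (a b)" for b
    have a'k: "a' b \<in> ktset" if "b \<in> B0" for b unfolding a'_def ktset_def by (rule polys_in_contract) (use Suc that in \<open>auto simp: ktset_def\<close>)
    have adec: "a b = Poly_Mapping.single 0 (c b) + tpow 1 * a' b" if "b \<in> B0" for b
      using t_to_0_decomp[of "a b"] ktset_const[of "a b"] Suc.prems(2) that by (simp add: c_def a'_def)
    define S where "S = (\<Sum>b\<in>B0. a b * b)"
    define S0 where "S0 = (\<Sum>b\<in>B0. sc (c b) b)"
    define S1 where "S1 = (\<Sum>b\<in>B0. a' b * b)"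
    have Sdec: "S = S0 + tpow 1 * S1"
      unfolding S_def S0_def S1_def sc_def
      by (simp add: adec distrib_right sum.distrib sum_distrib_left mult.assoc cong: sum.cong)
    have S1S: "S1 \<in> Sset r" unfolding S1_def using a'k BsS sub
      by (intro Sset_sum Sset_mult) (auto intro: ktset_Sset)
    have S0R: "S0 \<in> Rset r" unfolding S0_def using BsR sub by (intro Rset_sum Rset_sc) auto
    have "tpow k * (tpow (n - Suc k) * S) \<in> J" using J_mult[OF Suc.prems(3)[folded S_def] tpow_Sset] .
    moreover have "tpow k * (tpow (n - Suc k) * S) = tpow (n-1) * S0 + tpow n * S1"
    proof -
      have "tpow k * (tpow (n - Suc k) * S) = tpow (n-1) * S"
        using Suc.prems(1) by (simp add: mult.assoc[symmetric] tpow_mult)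
      also have "\<dots> = tpow (n-1) * S0 + (tpow (n-1) * tpow 1) * S1"
        by (simp add: Sdec distrib_left mult.assoc)
      also have "tpow (n-1) * tpow 1 = (tpow n :: 'k mpoly)" using n2 by (simp add: tpow_mult)
      finally show ?thesis .
    qed
    ultimately have "tpow (n-1) * S0 \<in> J"
      using J_tpow_n[OF S1S] by (metis J_diff add_diff_cancel_right')
    hence "S0 \<in> IB" by (rule J_top[OF S0R])
    hence c0: "\<forall>b\<in>B0. c b = 0" using Indep[rule_format, of B0 c] fin sub unfolding S0_def by blast
    have aa: "a b = tpow 1 * a' b" if "b \<in> B0" for b using adec[OF that] c0 that by simp
    have "tpow (n - Suc k) * S = tpow (n - k) * S1"
    proof -
      have "S = tpow 1 * S1" unfolding S_def S1_def
        by (simp add: aa sum_distrib_left mult.assoc cong: sum.cong)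
      moreover have "Suc (n - Suc k) = n - k" using Suc.prems(1) by simp
      ultimately show ?thesis by (simp add: mult.assoc[symmetric] tpow_mult)
    qed
    hence "tpow (n - k) * S1 \<in> J" using Suc.prems(3) S_def by simp
    hence IH: "\<forall>b\<in>B0. \<exists>q\<in>ktset. a' b = tpow k * q"
      using Suc.hyps[of a'] Suc.prems(1) a'k unfolding S1_def by auto
    show ?case
    proof
      fix b assume b: "b \<in> B0"
      then obtain q where q: "q \<in> ktset" "a' b = tpow k * q" using IH by blast
      have "a b = tpow (Suc k) * q" using aa[OF b] q(2) by (simp add: mult.assoc[symmetric] tpow_mult)
      then show "\<exists>q\<in>ktset. a b = tpow (Suc k) * q" using q(1) by blast
    qed
  qed
  have C1a: "\<forall>s\<in>Sset r. \<exists>Bs0 a. finite Bs0 \<and> Bs0 \<subseteq> Bs \<and> (\<forall>b\<in>Bs0. a b \<in> ktset) \<and> s - (\<Sum>b\<in>Bs0. a b * b) \<in> J"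
  proof
    fix s :: "'k mpoly" assume "s \<in> Sset r"
    then have "good s" by (rule good_S)
    then show "\<exists>Bs0 a. finite Bs0 \<and> Bs0 \<subseteq> Bs \<and> (\<forall>b\<in>Bs0. a b \<in> ktset) \<and> s - (\<Sum>b\<in>Bs0. a b * b) \<in> J"
      by (simp only: good_def)
  qed
  have C1b: "\<forall>Bs0 a. finite Bs0 \<and> Bs0 \<subseteq> Bs \<and> (\<forall>b\<in>Bs0. a b \<in> ktset) \<and> (\<Sum>b\<in>Bs0. a b * b) \<in> J \<longrightarrow>
                (\<forall>b\<in>Bs0. \<exists>q\<in>ktset. a b = tpow n * q)"
  proof (intro allI impI)
    fix Bs0 a
    assume a: "finite Bs0 \<and> Bs0 \<subseteq> Bs \<and> (\<forall>b\<in>Bs0. a b \<in> ktset) \<and> (\<Sum>b\<in>Bs0. a b * b) \<in> J"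
    then show "\<forall>b\<in>Bs0. \<exists>q\<in>ktset. a b = tpow n * q"
      using indep_aux[of Bs0 n a] by auto
  qed
  have C1: "\<exists>Bs\<subseteq>Sset r.
       (\<forall>s\<in>Sset r. \<exists>Bs0 a. finite Bs0 \<and> Bs0 \<subseteq> Bs \<and> (\<forall>b\<in>Bs0. a b \<in> ktset) \<and> s - (\<Sum>b\<in>Bs0. a b * b) \<in> J) \<and>
       (\<forall>Bs0 a. finite Bs0 \<and> Bs0 \<subseteq> Bs \<and> (\<forall>b\<in>Bs0. a b \<in> ktset) \<and> (\<Sum>b\<in>Bs0. a b * b) \<in> J \<longrightarrow>
                (\<forall>b\<in>Bs0. \<exists>q\<in>ktset. a b = tpow n * q))"
    apply (rule exI[of _ Bs])
    apply (intro conjI)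
      apply (use BsS in blast)
     apply (rule C1a)
    apply (rule C1b)
    done
  show ?thesis
    unfolding free_extension_def
  proof (intro conjI)
    show "\<exists>Bs\<subseteq>Sset r.
       (\<forall>s\<in>Sset r. \<exists>Bs0 a. finite Bs0 \<and> Bs0 \<subseteq> Bs \<and> (\<forall>b\<in>Bs0. a b \<in> ktset) \<and> s - (\<Sum>b\<in>Bs0. a b * b) \<in> J) \<and>
       (\<forall>Bs0 a. finite Bs0 \<and> Bs0 \<subseteq> Bs \<and> (\<forall>b\<in>Bs0. a b \<in> ktset) \<and> (\<Sum>b\<in>Bs0. a b * b) \<in> J \<longrightarrow>
                (\<forall>b\<in>Bs0. \<exists>q\<in>ktset. a b = tpow n * q))"
      by (rule C1)
  next
    show "\<forall>g\<in>Rset r. \<exists>s\<in>Sset r. t_to_0 s - g \<in> IB"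
    proof
      fix g :: "'k mpoly" assume g: "g \<in> Rset r"
      have "t_to_0 g - g = 0" using t_to_0_noT[OF Rset_noT[OF g]] by simp
      then show "\<exists>s\<in>Sset r. t_to_0 s - g \<in> IB"
        using g Rset_Sset by (intro bexI[of _ g]) (auto simp: IB_iff Rset_def)
    qed
  next
    show "\<forall>s\<in>Sset r. (t_to_0 s \<in> IB) = (\<exists>u\<in>Sset r. s - tpow 1 * u \<in> J)"
    proof (intro ballI iffI)
      fix s :: "'k mpoly" assume s: "s \<in> Sset r" and u: "\<exists>u\<in>Sset r. s - tpow 1 * u \<in> J"
      then obtain u where "u \<in> Sset r" "s - tpow 1 * u \<in> J" by blast
      then show "t_to_0 s \<in> IB" by (intro cond3_back[OF s])
    next
      fix s :: "'k mpoly" assume s: "s \<in> Sset r" and s0: "t_to_0 s \<in> IB"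
      obtain h where h: "h \<in> Rset r" "contract (t_to_0 s) G = contract h FB" using A[OF s0] by blast
      have j: "t_to_0 s - tpow (n-1) * h \<in> J" by (rule J_corr[OF s0 h])
      define u where "u = contract (tpow 1) s + tpow (n-2) * h"
      have uS: "u \<in> Sset r" unfolding u_def using s h Rset_Sset
        by (intro Sset_add Sset_mult tpow_Sset) (auto simp: Sset_def intro: polys_in_contract)
      have e12: "1 + (n-2) = n - 1" using n2 by simp
      have "tpow 1 * tpow (n-2) = (tpow (n-1) :: 'k mpoly)" by (simp only: tpow_mult e12)
      hence "s - tpow 1 * u = t_to_0 s - tpow (n-1) * h"
        using t_to_0_decomp[of s] unfolding u_def
        by (metis (no_types, lifting) add_diff_cancel_left' diff_diff_eq2 distrib_left mult.assoc)
      then have "s - tpow 1 * u \<in> J" using j by (simp only:)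
      then show "\<exists>u\<in>Sset r. s - tpow 1 * u \<in> J" using uS by (intro bexI[of _ u])
    qed
  qed
qed

end


theorem corollary2p5:
  fixes r n jB :: nat and FB G :: "'k::field mpoly"
  assumes "n \<ge> 2"
    and "FB \<in> Rset r" and "homogeneous jB FB"
    and "G \<in> Rset r" and "homogeneous (jB + n - 1) G"
  shows "free_extension r n (Ann {0..r} (tpow (n - 1) * FB + G)) (Ann {1..r} FB)
         \<longleftrightarrow> (\<forall>p\<in>ideal_sq (Ann {1..r} FB). contract p G = 0)"
proof -
  interpret c: cset r n FB G using assms by unfold_locales auto
  have eqJ: "Ann {0..r} (tpow (n - 1) * FB + G) = c.J" by (simp add: c.J_def c.F_def)
  have eqI: "Ann {1..r} FB = c.IB" by (simp add: c.IB_def)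
  show ?thesis unfolding eqJ eqI
  proof
    assume fe: "free_extension r n c.J c.IB"
    have c3': "\<forall>s\<in>Sset r. (t_to_0 s \<in> c.IB) = (\<exists>u\<in>Sset r. s - tpow 1 * u \<in> c.J)"
      using fe unfolding free_extension_def by (elim conjE)
    have c3: "\<forall>s\<in>Sset r. t_to_0 s \<in> c.IB \<longrightarrow> (\<exists>u\<in>Sset r. s - tpow 1 * u \<in> c.J)"
      using c3' by (intro ballI impI) (simp only:)
    have "\<forall>e\<in>c.IB. \<exists>h. contract e G = contract h FB"
      using c.forward[OF c3] by blast
    then show "\<forall>p\<in>ideal_sq c.IB. contract p G = 0" by (rule c.sq_lemma)
  next
    assume H: "\<forall>p\<in>ideal_sq c.IB. contract p G = 0"
    show "free_extension r n c.J c.IB" by (rule c.backward[OF H])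
  qed
qed

end
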